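(* Let $G$ be a group and let $(\Gamma,\psi)$ be a $G$-gain graph on $n$ vertices. Let $\alpha=\{C_0,C_1,\dots,C_{2k}\}$ be a $G$-WQH partition of the vertex set of $\Gamma$, let $(\Gamma^\alpha,\psi^\alpha)$ be the gain graph obtained from $(\Gamma,\psi)$ and $\alpha$ as described in the context, and let $Q_\alpha$ be the matrix associated with $\alpha$. Then, with vertices ordered as $C_0,C_1,C_2,\dots,C_{2k}$, $$A_{(\Gamma^\alpha,\psi^\alpha)}=Q_\alpha A_{(\Gamma,\psi)}Q_\alpha.$$ In particular, $(\Gamma,\psi)$ and $(\Gamma^\alpha,\psi^\alpha)$ are $G$-cospectral.
   Context: A $G$-gain graph $(\Gamma,\psi)$ consists of a directed graph $\Gamma=(V,A)$ in which every arc $(u,w)$ has its reverse $(w,u)$ (no loops), and a gain function $\psi:A\to G$ with $\psi(w,u)=\psi(u,w)^{-1}$. Set $\psi(v,w)=0\in\mathbb{C}G$ when $v,w$ are not adjacent. For $V=\{v_1,\dots,v_n\}$, the adjacency matrix $A_{(\Gamma,\psi)}\in M_n(\mathbb{C}G)$ has $(i,j)$ entry $\psi(v_i,v_j)$ if $v_i\sim v_j$ and $0$ otherwise; here $\mathbb{C}G$ is the complex group algebra with neutral element $1_G$. Given a partition $\alpha=\{C_0,C_1,\dots,C_{2k}\}$ of $V$, for a vertex $v$ let $\Psi_i(v)=\sum_{w\in C_i,\,w\sim v}\psi(v,w)\in\mathbb{C}G$. The partition is a $G$-WQH partition if: (1) $|C_i|=|C_{i+1}|$ for every odd $i<2k$;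 (2) for $i,j\in\{1,\dots,2k\}$ and $v,v'\in C_i$, $\Psi_j(v)=\Psi_j(v')$; (3) for odd $i,j<2k$ and $v\in C_i$, $v'\in C_{i+1}$, $\Psi_j(v)=\Psi_{j+1}(v')$ and $\Psi_{j+1}(v)=\Psi_j(v')$; (4) for every $v\in C_0$ and every odd $i<2k$, either (a) $\Psi_i(v)=\Psi_{i+1}(v)$, or (b) $\Psi_i(v)=|C_i|g_1$ and $\Psi_{i+1}(v)=|C_{i+1}|g_2$ for some distinct $g_1,g_2\in G\cup\{0\}\subset\mathbb{C}G$ (i.e. $v$ is joined to all of $C_i$ with gain $g_1$, or to none if $g_1=0$, and likewise to $C_{i+1}$ with $g_2$). The gain graph $(\Gamma^\alpha,\psi^\alpha)$ on the same vertex set is defined by (with $\psi^\alpha(v,w)=0$ meaning non-adjacency): $\psi^\alpha(v,w)=\psi(v,w)$ for $v,w\in C_1\cup\dots\cup C_{2k}$; $\psi^\alpha(v,w)=\psi(v,w)$ for $v,w\in C_0$; for $v\in C_0$ and odd $i<2k$ with $\Psi_i(v)=\Psi_{i+1}(v)$, $\psi^\alpha(v,w)=\psi(v,w)$ for $w\in C_i\cup C_{i+1}$; for $v\in C_0$ and odd $i<2k$ in case (b) with $g_1,g_2$, $\psi^\alpha(v,w)=g_2$ for $w\in C_i$ and $\psi^\alpha(v,w)=g_1$ for $w\in C_{i+1}$ (gains of reversed arcs are the inverses). For $m\ge1$ let $Q_m=\begin{pmatrix} I_m-\frac1m J_m & \frac1m J_m\\ \frac1m J_m & I_m-\frac1m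 J_m\end{pmatrix}\in M_{2m}(\mathbb{C}G)$, where $I_m$ is the identity (diagonal entries $1_G$) and $J_m$ the all-$1_G$ matrix. With $m_t=|C_{2t-1}|=|C_{2t}|$ for $t=1,\dots,k$, define the block-diagonal matrix $Q_\alpha=\mathrm{diag}(I_{|C_0|},Q_{m_1},\dots,Q_{m_k})\in M_n(\mathbb{C}G)$. For $a=\sum_x a_x x\in\mathbb{C}G$, let $\mu(a)$ be the class function on $G$ given by $\mu(a)(g)=\sum_{x\in[g]}a_x$, where $[g]$ is the conjugacy class of $g$. Two matrices $A,B\in M_n(\mathbb{C}G)$ are $G$-cospectral if $\mu(\mathrm{Tr}(A^h))=\mu(\mathrm{Tr}(B^h))$ for every positive integer $h$, where $\mathrm{Tr}$ is the sum of diagonal entries in $\mathbb{C}G$; two $G$-gain graphs are $G$-cospectral if their adjacency matrices are. *)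

theory Defs
  imports Complex_Main "HOL-Library.Poly_Mapping" "Jordan_Normal_Form.Matrix"
begin

text \<open>The group G is a type of class group_add (group written additively; it is NOT
assumed commutative). The complex group algebra CG is the monoid algebra
'g =>0 complex (finitely supported functions with convolution product);
its neutral element 1_G is the unit 1 of this ring.\<close>

type_synonym 'g cg = "'g \<Rightarrow>\<^sub>0 complex"

definition cg_elem :: "'g::group_add \<Rightarrow> 'g cg" where
  "cg_elem g = Poly_Mapping.single g 1"

text \<open>Embedding of G \<union> {0}: None stands for 0 (non-adjacency), Some g for g.\<close>
definition cg_opt :: "'g::group_add option \<Rightarrow> 'g cg" where
  "cg_opt x = (case x of None \<Rightarrow> 0 | Some g \<Rightarrow> cg_elem g)"

definition cg_scalar :: "complex \<Rightarrow> 'g::group_add cg" where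
  "cg_scalar c = Poly_Mapping.single 0 c"

definition conj_class :: "'g::group_add \<Rightarrow> 'g set" where
  "conj_class g = {h + g - h | h. True}"

definition cg_mu :: "'g::group_add cg \<Rightarrow> 'g \<Rightarrow> complex" where
  "cg_mu a g = (\<Sum>x \<in> Poly_Mapping.keys a \<inter> conj_class g. Poly_Mapping.lookup a x)"

definition mat_trace :: "'a::comm_monoid_add mat \<Rightarrow> 'a" where
  "mat_trace A = (\<Sum>i<dim_row A. A $$ (i, i))"

definition G_cospectral :: "'g::group_add cg mat \<Rightarrow> 'g cg mat \<Rightarrow> bool" where
  "G_cospectral A B \<longleftrightarrow> (\<forall>h::nat. h > 0 \<longrightarrow> cg_mu (mat_trace (A ^\<^sub>m h)) = cg_mu (mat_trace (B ^\<^sub>m h)))"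

text \<open>A G-gain graph on the vertex set {0..<n}: gg v w = Some g means v ~ w with
gain psi(v,w) = g; gg v w = None means v, w are not adjacent.\<close>
definition gain_graph :: "nat \<Rightarrow> (nat \<Rightarrow> nat \<Rightarrow> 'g::group_add option) \<Rightarrow> bool" where
  "gain_graph n gg \<longleftrightarrow>
     (\<forall>v<n. gg v v = None) \<and>
     (\<forall>v<n. \<forall>w<n. gg w v = map_option uminus (gg v w))"

definition adj_matrix :: "nat \<Rightarrow> (nat \<Rightarrow> nat \<Rightarrow> 'g::group_add option) \<Rightarrow> 'g cg mat" where
  "adj_matrix n gg = mat n n (\<lambda>(i, j). cg_opt (gg i j))"

text \<open>The vertices are ordered as C_0, C_1, ..., C_2k, so the partition is determined by
c0 = |C_0| and the list ms = [m_1, ..., m_k] with m_t = |C_(2t-1)| = |C_(2t)|. Block indices as in the paper: 0..2k.\<close>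

definition nverts :: "nat \<Rightarrow> nat list \<Rightarrow> nat" where
  "nverts c0 ms = c0 + 2 * sum_list ms"

text \<open>Start of the pair C_(2t+1), C_(2t+2) (t counted from 0).\<close>
definition pair_start :: "nat \<Rightarrow> nat list \<Rightarrow> nat \<Rightarrow> nat" where
  "pair_start c0 ms t = c0 + 2 * sum_list (take t ms)"

definition blk :: "nat \<Rightarrow> nat list \<Rightarrow> nat \<Rightarrow> nat set" where
  "blk c0 ms i =
     (if i = 0 then {0..<c0}
      else if i \<le> 2 * length ms then
        (let t = (i - 1) div 2; s = pair_start c0 ms t; m = ms ! t in
         if odd i then {s..<s + m} else {s + m..<s + 2 * m})
      else {})"

definition Psi :: "nat \<Rightarrow> nat list \<Rightarrow> (nat \<Rightarrow> nat \<Rightarrow> 'g::group_add option) \<Rightarrow> nat \<Rightarrow> nat \<Rightarrow> 'g cg" where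
  "Psi c0 ms gg i v = (\<Sum>w \<in> blk c0 ms i. cg_opt (gg v w))"

definition WQH :: "nat \<Rightarrow> nat list \<Rightarrow> (nat \<Rightarrow> nat \<Rightarrow> 'g::group_add option) \<Rightarrow> bool" where
  "WQH c0 ms gg \<longleftrightarrow>
     \<comment> \<open>(1) |C_i| = |C_(i+1)| for odd i holds by construction of blk\<close>
     \<comment> \<open>(2)\<close>
     (\<forall>i \<in> {1..2 * length ms}. \<forall>j \<in> {1..2 * length ms}. \<forall>v \<in> blk c0 ms i. \<forall>v' \<in> blk c0 ms i.
        Psi c0 ms gg j v = Psi c0 ms gg j v') \<and>
     \<comment> \<open>(3)\<close>
     (\<forall>i j. odd i \<and> i < 2 * length ms \<and> odd j \<and> j < 2 * length ms \<longrightarrow>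
        (\<forall>v \<in> blk c0 ms i. \<forall>v' \<in> blk c0 ms (i + 1).
           Psi c0 ms gg j v = Psi c0 ms gg (j + 1) v' \<and> Psi c0 ms gg (j + 1) v = Psi c0 ms gg j v')) \<and>
     \<comment> \<open>(4)\<close>
     (\<forall>v \<in> blk c0 ms 0. \<forall>i. odd i \<and> i < 2 * length ms \<longrightarrow>
        Psi c0 ms gg i v = Psi c0 ms gg (i + 1) v \<or>
        (\<exists>g1 g2. g1 \<noteq> g2 \<and>
           Psi c0 ms gg i v = cg_scalar (of_nat (card (blk c0 ms i))) * cg_opt g1 \<and>
           Psi c0 ms gg (i + 1) v = cg_scalar (of_nat (card (blk c0 ms (i + 1)))) * cg_opt g2))"

text \<open>For v in C_0 and w in C_i \<union> C_(i+1), i odd: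
unchanged if Psi_i(v) = Psi_(i+1)(v); otherwise (case (b)) with the elements g1, g2 of
G \<union> {0} from condition (4b), gains g2 towards C_i and g1 towards C_(i+1).
Arcs from C_1 \<union> ... \<union> C_2k into C_0 get the inverse gains.\<close>

definition case_b_pair :: "nat \<Rightarrow> nat list \<Rightarrow> (nat \<Rightarrow> nat \<Rightarrow> 'g::group_add option) \<Rightarrow> nat \<Rightarrow> nat \<Rightarrow> 'g option \<times> 'g option" where
  "case_b_pair c0 ms gg i v =
     (SOME (g1, g2). g1 \<noteq> g2 \<and>
        Psi c0 ms gg i v = cg_scalar (of_nat (card (blk c0 ms i))) * cg_opt g1 \<and>
        Psi c0 ms gg (i + 1) v = cg_scalar (of_nat (card (blk c0 ms (i + 1)))) * cg_opt g2)"

definition psi_from_C0 :: "nat \<Rightarrow> nat list \<Rightarrow> (nat \<Rightarrow> nat \<Rightarrow> 'g::group_add option) \<Rightarrow> nat \<Rightarrow> nat \<Rightarrow> 'g option" where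
  "psi_from_C0 c0 ms gg v w =
     (let i = (if odd (THE j. j \<noteq> 0 \<and> w \<in> blk c0 ms j) then (THE j. j \<noteq> 0 \<and> w \<in> blk c0 ms j)
               else (THE j. j \<noteq> 0 \<and> w \<in> blk c0 ms j) - 1) in
      if Psi c0 ms gg i v = Psi c0 ms gg (i + 1) v then gg v w
      else (let (g1, g2) = case_b_pair c0 ms gg i v in
            if w \<in> blk c0 ms i then g2 else g1))"

definition psi_alpha :: "nat \<Rightarrow> nat list \<Rightarrow> (nat \<Rightarrow> nat \<Rightarrow> 'g::group_add option) \<Rightarrow> nat \<Rightarrow> nat \<Rightarrow> 'g option" where
  "psi_alpha c0 ms gg v w =
     (if (v \<in> blk c0 ms 0) = (w \<in> blk c0 ms 0) then gg v w
      else if v \<in> blk c0 ms 0 then psi_from_C0 c0 ms gg v w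
      else map_option uminus (psi_from_C0 c0 ms gg w v))"

definition Q_block :: "nat \<Rightarrow> 'g::group_add cg mat" where
  "Q_block m = mat (2 * m) (2 * m) (\<lambda>(i, j).
      (if i = j then 1 else 0) +
      (if (i < m) = (j < m) then cg_scalar (- 1 / of_nat m) else cg_scalar (1 / of_nat m)))"

text \<open>Q_alpha = diag(I_|C_0|, Q_m1, ..., Q_mk), written entrywise.\<close>
definition Q_alpha :: "nat \<Rightarrow> nat list \<Rightarrow> 'g::group_add cg mat" where
  "Q_alpha c0 ms = mat (nverts c0 ms) (nverts c0 ms) (\<lambda>(i, j).
      if i < c0 \<or> j < c0 then (if i = j then 1 else 0)
      else (let t = (THE t. t < length ms \<and> pair_start c0 ms t \<le> i \<and> i < pair_start c0 ms (Suc t)) in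
            if pair_start c0 ms t \<le> j \<and> j < pair_start c0 ms (Suc t)
            then Q_block (ms ! t) $$ (i - pair_start c0 ms t, j - pair_start c0 ms t)
            else 0))"

end

theory Submission
  imports Defs
begin


definition ptn :: "nat \<Rightarrow> nat" where "ptn j = (if odd j then j + 1 else j - 1)"
definition lon :: "nat \<Rightarrow> nat" where "lon j = (if odd j then j else j - 1)"

context
  fixes c0 :: nat and ms :: "nat list"
  assumes m1: "\<forall>m \<in> set ms. m \<ge> 1"
begin

abbreviation "ps \<equiv> pair_start c0 ms"
abbreviation "nn \<equiv> nverts c0 ms"
abbreviation "B \<equiv> blk c0 ms"

lemma ps_Suc: "t < length ms \<Longrightarrow> ps (Suc t) = ps t + 2 * ms ! t"
  by (simp add: pair_start_def take_Suc_conv_app_nth)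

lemma ms_pos: "t < length ms \<Longrightarrow> ms ! t \<ge> 1"
  using m1 by auto

lemma ps_0: "ps 0 = c0" by (simp add: pair_start_def)

lemma ps_len: "ps (length ms) = nn" by (simp add: pair_start_def nverts_def)

lemma ps_mono_aux: "t + d \<le> length ms \<Longrightarrow> ps t \<le> ps (t + d)"
proof (induction d)
  case 0 then show ?case by simp
next
  case (Suc d)
  then have "ps (t + d) \<le> ps (t + Suc d)" using ps_Suc[of "t+d"] by simp
  with Suc show ?case by simp
qed

lemma ps_mono: "t \<le> t' \<Longrightarrow> t' \<le> length ms \<Longrightarrow> ps t \<le> ps t'"
  using ps_mono_aux[of t "t' - t"] by simp

lemma ps_ge: "c0 \<le> ps t" by (simp add: pair_start_def)

lemma ps_le: "t \<le> length ms \<Longrightarrow> ps t \<le> nn"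
  using ps_mono[of t "length ms"] ps_len by simp

lemma pair_unique:
  assumes "t < length ms" "t' < length ms" "ps t \<le> v" "v < ps (Suc t)" "ps t' \<le> v" "v < ps (Suc t')"
  shows "t = t'"
proof (rule ccontr)
  assume "t \<noteq> t'"
  then consider "Suc t \<le> t'" | "Suc t' \<le> t" by linarith
  then show False
  proof cases
    case 1 then have "ps (Suc t) \<le> ps t'" using ps_mono assms by simp
    then show False using assms by simp
  next
    case 2 then have "ps (Suc t') \<le> ps t" using ps_mono assms by simp
    then show False using assms by simp
  qed
qed

lemma pair_exists:
  assumes "c0 \<le> v" "v < nn"
  shows "\<exists>t. t < length ms \<and> ps t \<le> v \<and> v < ps (Suc t)"
proof -
  have ne: "ms \<noteq> []" using assms by (auto simp: nverts_def)
  define t where "t = (LEAST t. v < ps (Suc t))"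
  have ex: "v < ps (Suc (length ms - 1))" using ne ps_len assms by simp
  have t1: "v < ps (Suc t)" unfolding t_def by (rule LeastI, rule ex)
  have t2: "t \<le> length ms - 1" unfolding t_def by (rule Least_le, rule ex)
  have t3: "ps t \<le> v"
  proof (cases t)
    case 0 then show ?thesis using assms ps_0 by simp
  next
    case (Suc t0)
    have "\<not> v < ps (Suc t0)" using not_less_Least[of t0 "\<lambda>t. v < ps (Suc t)"] Suc t_def by simp
    then show ?thesis using Suc by simp
  qed
  have "t < length ms" using t2 ne by (cases ms) auto
  then show ?thesis using t1 t3 by (intro exI[of _ t]) auto
qed

lemma blk_odd: "t < length ms \<Longrightarrow> B (2*t+1) = {ps t..<ps t + ms!t}"
  by (simp add: blk_def Let_def)

lemma blk_even: "t < length ms \<Longrightarrow> B (2*t+2) = {ps t + ms!t..<ps (Suc t)}"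
  by (simp add: blk_def Let_def ps_Suc)

lemma blk_0: "B 0 = {0..<c0}" by (simp add: blk_def)

lemma blk_big: "j > 2 * length ms \<Longrightarrow> B j = {}" by (simp add: blk_def)

lemma j_cases:
  assumes "j \<noteq> 0" "j \<le> 2 * length ms"
  obtains t where "t < length ms" "j = 2*t+1" | t where "t < length ms" "j = 2*t+2"
proof -
  define t where "t = (j - 1) div 2"
  have "t < length ms" using assms unfolding t_def by linarith
  moreover have "j = 2*t+1 \<or> j = 2*t+2" using assms unfolding t_def by presburger
  ultimately show ?thesis using that by blast
qed


abbreviation "mb j \<equiv> ms ! ((j - 1) div 2)"
abbreviation "bi v \<equiv> THE j. j \<noteq> 0 \<and> v \<in> B j"

lemma blk_sub:
  assumes "j \<noteq> 0" "v \<in> B j"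
  shows "\<exists>t<length ms. (j = 2*t+1 \<or> j = 2*t+2) \<and> ps t \<le> v \<and> v < ps (Suc t)"
proof -
  have j: "j \<le> 2 * length ms" using assms blk_big by (metis empty_iff not_le)
  show ?thesis
  proof (rule j_cases[OF assms(1) j])
    fix t assume "t < length ms" "j = 2*t+1"
    then show ?thesis using assms blk_odd[of t] ps_Suc[of t] by (intro exI[of _ t]) auto
  next
    fix t assume "t < length ms" "j = 2*t+2"
    then show ?thesis using assms blk_even[of t] ps_Suc[of t] by (intro exI[of _ t]) auto
  qed
qed

lemma blk_R: "j \<noteq> 0 \<Longrightarrow> v \<in> B j \<Longrightarrow> c0 \<le> v \<and> v < nn"
  using blk_sub ps_ge ps_le by (meson Suc_leI le_trans less_le_trans)

lemma blk_lt: "v < nn" if "v \<in> B j"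
proof (cases "j = 0")
  case True then show ?thesis using that blk_0 by (auto simp: nverts_def)
next
  case False then show ?thesis using that blk_R by blast
qed

lemma blk_inj: assumes "v \<in> B j" "v \<in> B j'" shows "j = j'"
proof -
  consider "j = 0" "j' = 0" | "j = 0" "j' \<noteq> 0" | "j \<noteq> 0" "j' = 0" | "j \<noteq> 0" "j' \<noteq> 0" by blast
  then show ?thesis
  proof cases
    case 2 then show ?thesis using assms blk_R[of j' v] blk_0 by auto
  next
    case 3 then show ?thesis using assms blk_R[of j v] blk_0 by auto
  next
    case 4
    obtain t where t: "t<length ms" "j = 2*t+1 \<or> j = 2*t+2" "ps t \<le> v" "v < ps (Suc t)"
      using blk_sub[OF 4(1) assms(1)] by blast
    obtain t' where t': "t'<length ms" "j' = 2*t'+1 \<or> j' = 2*t'+2" "ps t' \<le> v" "v < ps (Suc t')"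
      using blk_sub[OF 4(2) assms(2)] by blast
    have "t = t'" using pair_unique t t' by blast
    then show ?thesis using t t' assms blk_odd[of t] blk_even[of t] by auto
  qed simp
qed

lemma R_blk: assumes "c0 \<le> v" "v < nn" shows "\<exists>j. j \<noteq> 0 \<and> j \<le> 2 * length ms \<and> v \<in> B j"
proof -
  obtain t where t: "t < length ms" "ps t \<le> v" "v < ps (Suc t)" using pair_exists assms by blast
  show ?thesis
  proof (cases "v < ps t + ms ! t")
    case True then show ?thesis using t blk_odd[of t] by (intro exI[of _ "2*t+1"]) auto
  next
    case False then show ?thesis using t blk_even[of t] by (intro exI[of _ "2*t+2"]) auto
  qed
qed

lemma bi_eq: assumes "j \<noteq> 0" "v \<in> B j" shows "bi v = j"
proof (rule the_equality)
  show "j \<noteq> 0 \<and> v \<in> B j" using assms by simp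
  fix x assume "x \<noteq> 0 \<and> v \<in> B x"
  then show "x = j" using blk_inj[of v x j] assms by simp
qed

lemma bi_R: assumes "c0 \<le> v" "v < nn" shows "bi v \<noteq> 0 \<and> bi v \<le> 2 * length ms \<and> v \<in> B (bi v)"
proof -
  obtain j where j: "j \<noteq> 0" "j \<le> 2 * length ms" "v \<in> B j" using R_blk[OF assms] by blast
  have "bi v = j" using bi_eq[OF j(1,3)] .
  then show ?thesis using j by simp
qed

lemma finite_blk: "finite (B j)"
  by (simp add: blk_def Let_def)

lemma blk_nz: "j \<noteq> 0 \<Longrightarrow> v \<in> B j \<Longrightarrow> j \<le> 2 * length ms"
  using blk_big by (metis empty_iff not_le)

lemma card_blk: assumes "j \<noteq> 0" "j \<le> 2 * length ms" shows "card (B j) = mb j"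
  by (rule j_cases[OF assms]) (simp_all add: blk_odd[simplified] blk_even[simplified] ps_Suc)

lemma mb_pos: assumes "j \<noteq> 0" "j \<le> 2 * length ms" shows "mb j \<ge> 1"
  by (rule j_cases[OF assms]) (use ms_pos in force)+

lemma blk_ne: assumes "j \<noteq> 0" "j \<le> 2 * length ms" shows "\<exists>v. v \<in> B j"
proof -
  have "card (B j) \<noteq> 0" using card_blk[OF assms] mb_pos[OF assms] by simp
  then show ?thesis by (metis card.empty ex_in_conv)
qed

lemma blk_sub_n: "B j \<subseteq> {0..<nn}" using blk_lt by auto

lemma pt_props: assumes "j \<noteq> 0" "j \<le> 2 * length ms"
  shows "ptn j \<noteq> 0" "ptn j \<le> 2 * length ms" "ptn (ptn j) = j" "ptn j \<noteq> j"
    "mb (ptn j) = mb j" "lon (ptn j) = lon j" "odd (lon j)" "lon j < 2 * length ms"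
    "lon j + 1 \<le> 2 * length ms" "lon j \<noteq> 0"
    "(j = lon j \<and> ptn j = lon j + 1) \<or> (j = lon j + 1 \<and> ptn j = lon j)"
  by (rule j_cases[OF assms]; simp add: ptn_def lon_def)+

end


lemma lookup_cg_opt: "Poly_Mapping.lookup (cg_opt x) k = (if x = Some k then 1 else 0)"
  by (cases x) (auto simp: cg_opt_def cg_elem_def lookup_single when_def)

lemma lookup_scal_l: "Poly_Mapping.lookup (cg_scalar c * x) k = c * Poly_Mapping.lookup x k"
  by (simp add: cg_scalar_def lookup_mult lookup_single when_mult mult_when)

lemma aux_inner: "Sum_any (\<lambda>aa. ((c::complex) when aa = 0) when k = a + (aa::'g::monoid_add)) = (c when k = a)"
proof -
  have "Sum_any (\<lambda>aa. ((c::complex) when aa = 0) when k = a + aa) = Sum_any (\<lambda>aa. ((c when k = a + aa) when aa = 0))"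
    by (simp add: when_commute)
  also have "\<dots> = (c when k = a)" by (subst Sum_any_when_equal) simp
  finally show ?thesis .
qed

lemma lookup_scal_r: "Poly_Mapping.lookup (x * cg_scalar c) k = Poly_Mapping.lookup x k * c"
  by (simp add: cg_scalar_def lookup_mult lookup_single aux_inner mult_when)


lemma scal_central: "cg_scalar c * x = x * cg_scalar c"
  by (rule poly_mapping_eqI) (simp add: lookup_scal_l lookup_scal_r mult.commute)

lemma lookup_scal: "Poly_Mapping.lookup (cg_scalar c) k = (if k = 0 then c else 0)"
  by (simp add: cg_scalar_def lookup_single when_def)

lemma lookup_sum_opt:
  assumes "finite S"
  shows "Poly_Mapping.lookup (\<Sum>w\<in>S. cg_opt (f w)) k = of_nat (card {w\<in>S. f w = Some k})"
proof -
  have "Poly_Mapping.lookup (\<Sum>w\<in>S. cg_opt (f w)) k = (\<Sum>w\<in>S. if f w = Some k then 1 else 0)"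
    by (simp add: lookup_sum lookup_cg_opt)
  also have "\<dots> = of_nat (card {w\<in>S. f w = Some k})"
    using assms by (simp add: sum.If_cases Int_def conj_commute)
  finally show ?thesis .
qed

lemma sum_opt_inv:
  fixes f f' :: "_ \<Rightarrow> 'g::group_add option"
  assumes "finite S" "finite S'"
    and "(\<Sum>w\<in>S. cg_opt (f w)) = (\<Sum>w\<in>S'. cg_opt (f' w))"
  shows "(\<Sum>w\<in>S. cg_opt (map_option uminus (f w))) = (\<Sum>w\<in>S'. cg_opt (map_option uminus (f' w)))"
proof (rule poly_mapping_eqI)
  fix k :: 'g
  have e0: "\<And>x. map_option uminus x = Some k \<longleftrightarrow> x = Some (- k)"
    by (case_tac x) (auto simp: minus_equation_iff)
  have e: "\<And>h S. {w\<in>S. map_option uminus (h w) = Some k} = {w\<in>S. h w = Some (- k)}"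
    by (simp only: e0)
  have "Poly_Mapping.lookup (\<Sum>w\<in>S. cg_opt (f w)) (-k) = Poly_Mapping.lookup (\<Sum>w\<in>S'. cg_opt (f' w)) (-k)"
    using assms(3) by simp
  then show "Poly_Mapping.lookup (\<Sum>w\<in>S. cg_opt (map_option uminus (f w))) k =
      Poly_Mapping.lookup (\<Sum>w\<in>S'. cg_opt (map_option uminus (f' w))) k"
    using assms(1,2) by (simp only: lookup_sum_opt e)
qed

lemma case_b_all:
  assumes "finite S"
    and "(\<Sum>w\<in>S. cg_opt (f w)) = cg_scalar (of_nat (card S)) * cg_opt g"
    and "w \<in> S"
  shows "f w = g"
proof (cases g)
  case None
  have "Poly_Mapping.lookup (\<Sum>w\<in>S. cg_opt (f w)) k = 0" for k
    using assms(2) None by (simp add: lookup_scal_l cg_opt_def)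
  then have "card {w\<in>S. f w = Some k} = 0" for k using lookup_sum_opt[OF assms(1), of f k] by simp
  then have "\<forall>k. w \<notin> {w\<in>S. f w = Some k}" using assms(1) by auto
  then show ?thesis using None assms(3) by auto
next
  case (Some h)
  have "Poly_Mapping.lookup (\<Sum>w\<in>S. cg_opt (f w)) h = of_nat (card S)"
    using assms(2) Some by (simp add: lookup_scal_l lookup_cg_opt)
  then have "card {w\<in>S. f w = Some h} = card S" using lookup_sum_opt[OF assms(1), of f h] by simp
  then have "{w\<in>S. f w = Some h} = S" using assms(1)
    by (metis (no_types, lifting) card_subset_eq mem_Collect_eq subsetI)
  then show ?thesis using Some assms(3) by blast
qed


context
  fixes c0 :: nat and ms :: "nat list"
  assumes m1: "\<forall>m \<in> set ms. m \<ge> 1"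
begin

abbreviation "psq \<equiv> pair_start c0 ms"
abbreviation "nnq \<equiv> nverts c0 ms"
abbreviation "Bq \<equiv> blk c0 ms"
abbreviation "mbq j \<equiv> ms ! ((j - 1) div 2)"
abbreviation "biq v \<equiv> THE j. j \<noteq> 0 \<and> v \<in> Bq j"

definition Dm :: "nat \<Rightarrow> nat \<Rightarrow> 'g::group_add cg" where
  "Dm v u = (if c0 \<le> v \<and> v < nnq then
      (if u \<in> Bq (biq v) then cg_scalar (- 1 / of_nat (mbq (biq v)))
       else if u \<in> Bq (ptn (biq v)) then cg_scalar (1 / of_nat (mbq (biq v))) else 0) else 0)"

lemma pair_of:
  assumes "c0 \<le> v" "v < nnq"
  obtains t where "t < length ms" "psq t \<le> v" "v < psq (Suc t)"
    "(THE t. t < length ms \<and> psq t \<le> v \<and> v < psq (Suc t)) = t"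
    "mbq (biq v) = ms ! t"
    "v < psq t + ms ! t \<Longrightarrow> biq v = 2*t+1 \<and> ptn (biq v) = 2*t+2"
    "\<not> v < psq t + ms ! t \<Longrightarrow> biq v = 2*t+2 \<and> ptn (biq v) = 2*t+1"
proof -
  obtain t where t: "t < length ms" "psq t \<le> v" "v < psq (Suc t)" using pair_exists[OF m1 assms] by blast
  have th: "(THE t. t < length ms \<and> psq t \<le> v \<and> v < psq (Suc t)) = t"
    using t pair_unique[OF m1] by blast
  have a: "v < psq t + ms ! t \<Longrightarrow> biq v = 2*t+1 \<and> ptn (biq v) = 2*t+2"
    using bi_eq[where ?c0.0=c0 and j="2*t+1" and v=v, OF m1] blk_odd[OF m1 t(1)] t by (simp add: ptn_def)
  have b: "\<not> v < psq t + ms ! t \<Longrightarrow> biq v = 2*t+2 \<and> ptn (biq v) = 2*t+1"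
    using bi_eq[where ?c0.0=c0 and j="2*t+2" and v=v, OF m1] blk_even[OF m1 t(1)] t by (simp add: ptn_def)
  have "mbq (biq v) = ms ! t" using a b by (cases "v < psq t + ms ! t") auto
  then show ?thesis using that t th a b by blast
qed

lemma Q_entry:
  assumes "v < nnq" "u < nnq"
  shows "Q_alpha c0 ms $$ (v, u) = (if v = u then 1 else 0) + (Dm v u :: 'g::group_add cg)"
proof (cases "v < c0 \<or> u < c0")
  case True
  have "Dm v u = (0 :: 'g cg)"
  proof (cases "v < c0")
    case True then show ?thesis by (simp add: Dm_def)
  next
    case False
    then have u: "u < c0" using \<open>v < c0 \<or> u < c0\<close> by simp
    have v: "c0 \<le> v" using False by simp
    have "biq v \<noteq> 0" "biq v \<le> 2 * length ms" using bi_R[OF m1 v assms(1)] by auto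
    then have "ptn (biq v) \<noteq> 0" using pt_props[OF m1] by blast
    have "u \<notin> Bq j" if "j \<noteq> 0" for j using blk_R[where ?c0.0=c0 and j=j and v=u, OF m1 that] u by auto
    then show ?thesis using \<open>biq v \<noteq> 0\<close> \<open>ptn (biq v) \<noteq> 0\<close> by (simp add: Dm_def)
  qed
  then show ?thesis using True assms by (simp add: Q_alpha_def nverts_def)
next
  case False
  then have v: "c0 \<le> v" and u: "c0 \<le> u" by auto
  obtain t where t: "t < length ms" "psq t \<le> v" "v < psq (Suc t)"
    "(THE t. t < length ms \<and> psq t \<le> v \<and> v < psq (Suc t)) = t"
    "mbq (biq v) = ms ! t"
    "v < psq t + ms ! t \<Longrightarrow> biq v = 2*t+1 \<and> ptn (biq v) = 2*t+2"
    "\<not> v < psq t + ms ! t \<Longrightarrow> biq v = 2*t+2 \<and> ptn (biq v) = 2*t+1"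
    using pair_of[OF v assms(1)] by blast
  have Q: "Q_alpha c0 ms $$ (v, u) = (if psq t \<le> u \<and> u < psq (Suc t)
            then Q_block (ms ! t) $$ (v - psq t, u - psq t) else (0::'g cg))"
    using False assms t(4) by (simp add: Q_alpha_def)
  have sz: "psq (Suc t) = psq t + 2 * ms ! t" using ps_Suc[OF m1 t(1)] .
  have bo: "Bq (2*t+1) = {psq t..<psq t + ms!t}" using blk_odd[OF m1 t(1)] .
  have be: "Bq (2*t+2) = {psq t + ms!t..<psq (Suc t)}" using blk_even[OF m1 t(1)] .
  show ?thesis
  proof (cases "psq t \<le> u \<and> u < psq (Suc t)")
    case True
    define m where "m = ms ! t"
    define s where "s = psq t"
    have h1: "u \<in> Bq (biq v) \<longleftrightarrow> ((v < s + m) \<longleftrightarrow> (u < s + m))"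
      using True t(6,7) bo be unfolding m_def s_def by (cases "v < psq t + ms ! t") auto
    have h2: "u \<in> Bq (ptn (biq v)) \<longleftrightarrow> \<not> ((v < s + m) \<longleftrightarrow> (u < s + m))"
      using True t(6,7) bo be unfolding m_def s_def by (cases "v < psq t + ms ! t") auto
    have Dv: "Dm v u = (if (v < s + m) \<longleftrightarrow> (u < s + m) then cg_scalar (- 1 / of_nat m)
        else cg_scalar (1 / of_nat m) :: 'g cg)"
      using h1 h2 v assms(1) t(5) unfolding Dm_def m_def by simp
    have lt: "v - s < 2 * m" "u - s < 2 * m" using True t(2,3) sz unfolding m_def s_def by auto
    have e1: "(v - s = u - s) \<longleftrightarrow> v = u" using True t(2) unfolding s_def by auto
    have e2: "(v - s < m) \<longleftrightarrow> (v < s + m)" "(u - s < m) \<longleftrightarrow> (u < s + m)"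
      using True t(2) unfolding s_def by auto
    have "Q_block (ms ! t) $$ (v - psq t, u - psq t) = (if v = u then 1 else 0) + (Dm v u :: 'g cg)"
      unfolding Dv Q_block_def m_def[symmetric] s_def[symmetric]
      using lt e1 e2 by (simp only: index_mat split_conv)
    then show ?thesis using Q True by simp
  next
    case False
    then have "v \<noteq> u" using t by auto
    moreover have "u \<notin> Bq (biq v)" "u \<notin> Bq (ptn (biq v))"
      using False t(6,7) bo be sz by (cases "v < psq t + ms ! t"; auto)+
    then have "Dm v u = (0::'g cg)" by (simp add: Dm_def)
    ultimately show ?thesis using Q False by simp
  qed
qed

lemma sum_two:
  fixes a b :: "nat \<Rightarrow> 'a::comm_monoid_add"
  assumes "j \<noteq> 0" "j \<le> 2 * length ms"
  shows "(\<Sum>u\<in>{0..<nnq}. if u \<in> Bq j then a u else if u \<in> Bq (ptn j) then b u else 0)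
       = (\<Sum>u\<in>Bq j. a u) + (\<Sum>u\<in>Bq (ptn j). b u)"
proof -
  have d: "Bq j \<inter> Bq (ptn j) = {}" using blk_inj[OF m1] pt_props(4)[OF m1 assms] by blast
  have s: "Bq j \<union> Bq (ptn j) \<subseteq> {0..<nnq}" using blk_sub_n[OF m1] by blast
  have "(\<Sum>u\<in>{0..<nnq}. if u \<in> Bq j then a u else if u \<in> Bq (ptn j) then b u else 0)
      = (\<Sum>u\<in>Bq j \<union> Bq (ptn j). if u \<in> Bq j then a u else if u \<in> Bq (ptn j) then b u else 0)"
    by (rule sum.mono_neutral_right) (use s in auto)
  also have "\<dots> = (\<Sum>u\<in>Bq j. if u \<in> Bq j then a u else if u \<in> Bq (ptn j) then b u else 0)
      + (\<Sum>u\<in>Bq (ptn j). if u \<in> Bq j then a u else if u \<in> Bq (ptn j) then b u else 0)"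
    by (rule sum.union_disjoint) (use d finite_blk[OF m1] in auto)
  also have "\<dots> = (\<Sum>u\<in>Bq j. a u) + (\<Sum>u\<in>Bq (ptn j). b u)"
    using d by (auto intro!: sum.cong arg_cong2[where f="(+)"])
  finally show ?thesis .
qed

lemma Dm_col:
  assumes "u < nnq" "w < nnq"
  shows "Dm u w = (if c0 \<le> w then (if u \<in> Bq (biq w) then cg_scalar (- 1 / of_nat (mbq (biq w)))
       else if u \<in> Bq (ptn (biq w)) then cg_scalar (1 / of_nat (mbq (biq w))) else 0) else 0)"
proof (cases "c0 \<le> w")
  case False
  have nw: "w \<notin> Bq j" if "j \<noteq> 0" for j using blk_R[OF m1 that, of w] False by auto
  have "Dm u w = 0"
  proof (cases "c0 \<le> u")
    case True
    have "biq u \<noteq> 0" "biq u \<le> 2 * length ms" using bi_R[OF m1 True assms(1)] by auto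
    then have "ptn (biq u) \<noteq> 0" using pt_props(1)[OF m1] by blast
    then show ?thesis using nw \<open>biq u \<noteq> 0\<close> by (simp add: Dm_def)
  qed (simp add: Dm_def)
  then show ?thesis using False by simp
next
  case True
  have bw: "biq w \<noteq> 0" "biq w \<le> 2 * length ms" "w \<in> Bq (biq w)" using bi_R[OF m1 True assms(2)] by auto
  note pw = pt_props[OF m1 bw(1,2)]
  show ?thesis
  proof (cases "c0 \<le> u")
    case False
    then show ?thesis using blk_R[where ?c0.0=c0 and v=u, OF m1] bw pw by (auto simp: Dm_def)
  next
    case cu: True
    have bu: "biq u \<noteq> 0" "biq u \<le> 2 * length ms" "u \<in> Bq (biq u)" using bi_R[OF m1 cu assms(1)] by auto
    note pu = pt_props[OF m1 bu(1,2)]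
    have f1: "biq w = biq u" if "w \<in> Bq (biq u)" using bi_eq[OF m1 bu(1) that] .
    have f2: "biq u = biq w" if "u \<in> Bq (biq w)" using bi_eq[OF m1 bw(1) that] .
    have f3: "biq w = ptn (biq u)" if "w \<in> Bq (ptn (biq u))" using bi_eq[OF m1 pu(1) that] .
    have f4: "biq u = ptn (biq w)" if "u \<in> Bq (ptn (biq w))" using bi_eq[OF m1 pw(1) that] .
    have e1: "w \<in> Bq (biq u) \<longleftrightarrow> u \<in> Bq (biq w)" using f1 f2 bu(3) bw(3) by auto
    have e2: "w \<in> Bq (ptn (biq u)) \<longleftrightarrow> u \<in> Bq (ptn (biq w))"
    proof
      assume "w \<in> Bq (ptn (biq u))"
      then have "ptn (biq w) = biq u" using f3 pu(3) by simp
      then show "u \<in> Bq (ptn (biq w))" using bu(3) by simp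
    next
      assume "u \<in> Bq (ptn (biq w))"
      then have "ptn (biq u) = biq w" using f4 pw(3) by simp
      then show "w \<in> Bq (ptn (biq u))" using bw(3) by simp
    qed
    have e3: "w \<in> Bq (biq u) \<Longrightarrow> mbq (biq u) = mbq (biq w)" using f1 by simp
    have e4: "w \<in> Bq (ptn (biq u)) \<Longrightarrow> mbq (biq u) = mbq (biq w)" using f3 pu(5) by simp
    show ?thesis using e1 e2 e3 e4 cu True assms by (simp add: Dm_def)
  qed
qed

lemma sumL:
  fixes X :: "nat \<Rightarrow> 'g::group_add cg"
  assumes "v < nnq"
  shows "(\<Sum>u\<in>{0..<nnq}. Q_alpha c0 ms $$ (v, u) * X u) = X v +
    (if c0 \<le> v then cg_scalar (- 1 / of_nat (mbq (biq v))) * (\<Sum>u\<in>Bq (biq v). X u)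
       + cg_scalar (1 / of_nat (mbq (biq v))) * (\<Sum>u\<in>Bq (ptn (biq v)). X u) else 0)"
proof -
  have "(\<Sum>u\<in>{0..<nnq}. Q_alpha c0 ms $$ (v, u) * X u) =
        (\<Sum>u\<in>{0..<nnq}. (if v = u then X u else 0) + Dm v u * X u)"
    by (rule sum.cong) (auto simp: Q_entry[OF assms] distrib_right)
  also have "\<dots> = X v + (\<Sum>u\<in>{0..<nnq}. Dm v u * X u)"
    using assms by (simp add: sum.distrib)
  also have "(\<Sum>u\<in>{0..<nnq}. Dm v u * X u) = (if c0 \<le> v then cg_scalar (- 1 / of_nat (mbq (biq v))) * (\<Sum>u\<in>Bq (biq v). X u)
       + cg_scalar (1 / of_nat (mbq (biq v))) * (\<Sum>u\<in>Bq (ptn (biq v)). X u) else 0)"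
  proof (cases "c0 \<le> v")
    case True
    have bv: "biq v \<noteq> 0" "biq v \<le> 2 * length ms" using bi_R[OF m1 True assms] by auto
    have "(\<Sum>u\<in>{0..<nnq}. Dm v u * X u) = (\<Sum>u\<in>{0..<nnq}. if u \<in> Bq (biq v) then
       cg_scalar (- 1 / of_nat (mbq (biq v))) * X u else if u \<in> Bq (ptn (biq v)) then
       cg_scalar (1 / of_nat (mbq (biq v))) * X u else 0)"
      by (rule sum.cong) (use True assms in \<open>auto simp: Dm_def\<close>)
    also have "\<dots> = (\<Sum>u\<in>Bq (biq v). cg_scalar (- 1 / of_nat (mbq (biq v))) * X u) +
        (\<Sum>u\<in>Bq (ptn (biq v)). cg_scalar (1 / of_nat (mbq (biq v))) * X u)"
      by (rule sum_two[OF bv])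
    finally show ?thesis using True by (simp add: sum_distrib_left)
  qed (simp add: Dm_def)
  finally show ?thesis .
qed

lemma sumR:
  fixes X :: "nat \<Rightarrow> 'g::group_add cg"
  assumes "w < nnq"
  shows "(\<Sum>u\<in>{0..<nnq}. X u * Q_alpha c0 ms $$ (u, w)) = X w +
    (if c0 \<le> w then (\<Sum>u\<in>Bq (biq w). X u) * cg_scalar (- 1 / of_nat (mbq (biq w)))
       + (\<Sum>u\<in>Bq (ptn (biq w)). X u) * cg_scalar (1 / of_nat (mbq (biq w))) else 0)"
proof -
  have "(\<Sum>u\<in>{0..<nnq}. X u * Q_alpha c0 ms $$ (u, w)) =
        (\<Sum>u\<in>{0..<nnq}. (if u = w then X u else 0) + X u * Dm u w)"
    by (rule sum.cong) (auto simp: Q_entry[OF _ assms] distrib_left)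
  also have "\<dots> = X w + (\<Sum>u\<in>{0..<nnq}. X u * Dm u w)"
    using assms by (simp add: sum.distrib)
  also have "(\<Sum>u\<in>{0..<nnq}. X u * Dm u w) = (if c0 \<le> w then (\<Sum>u\<in>Bq (biq w). X u) * cg_scalar (- 1 / of_nat (mbq (biq w)))
       + (\<Sum>u\<in>Bq (ptn (biq w)). X u) * cg_scalar (1 / of_nat (mbq (biq w))) else 0)"
  proof (cases "c0 \<le> w")
    case True
    have bw: "biq w \<noteq> 0" "biq w \<le> 2 * length ms" using bi_R[OF m1 True assms] by auto
    have "(\<Sum>u\<in>{0..<nnq}. X u * Dm u w) = (\<Sum>u\<in>{0..<nnq}. if u \<in> Bq (biq w) then
       X u * cg_scalar (- 1 / of_nat (mbq (biq w))) else if u \<in> Bq (ptn (biq w)) then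
       X u * cg_scalar (1 / of_nat (mbq (biq w))) else 0)"
      by (rule sum.cong) (use True assms in \<open>auto simp: Dm_col\<close>)
    also have "\<dots> = (\<Sum>u\<in>Bq (biq w). X u * cg_scalar (- 1 / of_nat (mbq (biq w)))) +
        (\<Sum>u\<in>Bq (ptn (biq w)). X u * cg_scalar (1 / of_nat (mbq (biq w))))"
      by (rule sum_two[OF bw])
    finally show ?thesis using True by (simp add: sum_distrib_right)
  next
    case False
    then show ?thesis using assms by (auto simp: Dm_col intro!: sum.neutral)
  qed
  finally show ?thesis .
qed

end


lemma ofnat_cg: "(of_nat m :: 'g::group_add cg) = cg_scalar (of_nat m)"
  by (simp add: cg_scalar_def)

lemma alg0: "(X::'g::group_add cg) * cg_scalar (- 1 / a) + X * cg_scalar (1 / a) = 0"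
  by (rule poly_mapping_eqI) (simp add: lookup_add lookup_scal_r field_simps)

lemma alg0': "cg_scalar (- 1 / a) * (X::'g::group_add cg) + cg_scalar (1 / a) * X = 0"
  by (rule poly_mapping_eqI) (simp add: lookup_add lookup_scal_l field_simps)

lemma alg1: "m \<noteq> 0 \<Longrightarrow> (x::'g::group_add cg) = y + (of_nat m * y) * cg_scalar (- 1 / of_nat m)
   + (of_nat m * x) * cg_scalar (1 / of_nat m)"
  by (rule poly_mapping_eqI) (simp add: ofnat_cg lookup_add lookup_scal_r lookup_scal_l field_simps)

lemma alg1': "m \<noteq> 0 \<Longrightarrow> (x::'g::group_add cg) = y + cg_scalar (- 1 / of_nat m) * (of_nat m * y)
   + cg_scalar (1 / of_nat m) * (of_nat m * x)"
  by (rule poly_mapping_eqI) (simp add: ofnat_cg lookup_add lookup_scal_r lookup_scal_l field_simps)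

lemma alg4:
  fixes C1 C2 a b :: "'g::group_add cg"
  assumes "mv \<noteq> 0" "mw \<noteq> 0" "of_nat mw * C1 = of_nat mv * a" "of_nat mw * C2 = of_nat mv * b"
  shows "cg_scalar (- 1 / of_nat mv) * C1 + cg_scalar (1 / of_nat mv) * C2
       = a * cg_scalar (- 1 / of_nat mw) + b * cg_scalar (1 / of_nat mw)"
proof (rule poly_mapping_eqI)
  fix k
  have h1: "of_nat mw * Poly_Mapping.lookup C1 k = of_nat mv * Poly_Mapping.lookup a k"
    using arg_cong[OF assms(3), of "\<lambda>x. Poly_Mapping.lookup x k"] by (simp add: ofnat_cg lookup_scal_l)
  have h2: "of_nat mw * Poly_Mapping.lookup C2 k = of_nat mv * Poly_Mapping.lookup b k"
    using arg_cong[OF assms(4), of "\<lambda>x. Poly_Mapping.lookup x k"] by (simp add: ofnat_cg lookup_scal_l)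
  have c1: "Poly_Mapping.lookup C1 k = of_nat mv * Poly_Mapping.lookup a k / of_nat mw"
    using h1 assms(2) by (simp add: field_simps)
  have c2: "Poly_Mapping.lookup C2 k = of_nat mv * Poly_Mapping.lookup b k / of_nat mw"
    using h2 assms(2) by (simp add: field_simps)
  show "Poly_Mapping.lookup (cg_scalar (- 1 / of_nat mv) * C1 + cg_scalar (1 / of_nat mv) * C2) k
       = Poly_Mapping.lookup (a * cg_scalar (- 1 / of_nat mw) + b * cg_scalar (1 / of_nat mw)) k"
    using assms(1,2) by (simp add: lookup_add lookup_scal_l lookup_scal_r c1 c2 field_simps)
qed

lemma mult_entry:
  fixes A B :: "'a::semiring_0 mat"
  assumes "A \<in> carrier_mat n n" "B \<in> carrier_mat n n" "i < n" "j < n"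
  shows "(A * B) $$ (i, j) = (\<Sum>u\<in>{0..<n}. A $$ (i, u) * B $$ (u, j))"
  using assms by (simp add: scalar_prod_def)

context
  fixes c0 :: nat and ms :: "nat list" and gg :: "nat \<Rightarrow> nat \<Rightarrow> 'g::group_add option"
  assumes m1: "\<forall>m \<in> set ms. m \<ge> 1"
    and gain: "gain_graph (nverts c0 ms) gg"
    and wqh: "WQH c0 ms gg"
begin

abbreviation "nr \<equiv> nverts c0 ms"
abbreviation "Br \<equiv> blk c0 ms"
abbreviation "mbr j \<equiv> ms ! ((j - 1) div 2)"
abbreviation "bir v \<equiv> THE j. j \<noteq> 0 \<and> v \<in> Br j"
abbreviation "Ps \<equiv> Psi c0 ms gg"
abbreviation "pa \<equiv> psi_alpha c0 ms gg"

lemma gsym: "v < nr \<Longrightarrow> w < nr \<Longrightarrow> gg w v = map_option uminus (gg v w)"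
  using gain unfolding gain_graph_def by blast

lemma W2: "i \<noteq> 0 \<Longrightarrow> i \<le> 2 * length ms \<Longrightarrow> j \<noteq> 0 \<Longrightarrow> j \<le> 2 * length ms \<Longrightarrow>
   v \<in> Br i \<Longrightarrow> v' \<in> Br i \<Longrightarrow> Ps j v = Ps j v'"
proof -
  assume a: "i \<noteq> 0" "i \<le> 2 * length ms" "j \<noteq> 0" "j \<le> 2 * length ms" "v \<in> Br i" "v' \<in> Br i"
  have "\<forall>i \<in> {1..2 * length ms}. \<forall>j \<in> {1..2 * length ms}. \<forall>v \<in> Br i. \<forall>v' \<in> Br i.
        Ps j v = Ps j v'" using conjunct1[OF wqh[unfolded WQH_def]] .
  moreover have "i \<in> {1..2 * length ms}" "j \<in> {1..2 * length ms}" using a by auto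
  ultimately show ?thesis using a(5,6) by blast
qed

lemma W3: "odd i \<Longrightarrow> i < 2 * length ms \<Longrightarrow> odd j \<Longrightarrow> j < 2 * length ms \<Longrightarrow>
   v \<in> Br i \<Longrightarrow> v' \<in> Br (i + 1) \<Longrightarrow> Ps j v = Ps (j + 1) v' \<and> Ps (j + 1) v = Ps j v'"
proof -
  have c: "\<forall>i j. odd i \<and> i < 2 * length ms \<and> odd j \<and> j < 2 * length ms \<longrightarrow>
        (\<forall>v \<in> Br i. \<forall>v' \<in> Br (i + 1).
           Ps j v = Ps (j + 1) v' \<and> Ps (j + 1) v = Ps j v')"
    using conjunct1[OF conjunct2[OF wqh[unfolded WQH_def]]] .
  assume "odd i" "i < 2 * length ms" "odd j" "j < 2 * length ms" "v \<in> Br i" "v' \<in> Br (i + 1)"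
  then show ?thesis using c by blast
qed

lemma W4: "v < c0 \<Longrightarrow> odd i \<Longrightarrow> i < 2 * length ms \<Longrightarrow> Ps i v \<noteq> Ps (i + 1) v \<Longrightarrow>
   (\<exists>g1 g2. g1 \<noteq> g2 \<and>
           Ps i v = cg_scalar (of_nat (card (Br i))) * cg_opt g1 \<and>
           Ps (i + 1) v = cg_scalar (of_nat (card (Br (i + 1)))) * cg_opt g2)"
proof -
  assume a: "v < c0" "odd i" "i < 2 * length ms" "Ps i v \<noteq> Ps (i + 1) v"
  have "\<forall>v \<in> Br 0. \<forall>i. odd i \<and> i < 2 * length ms \<longrightarrow>
        Ps i v = Ps (i + 1) v \<or>
        (\<exists>g1 g2. g1 \<noteq> g2 \<and>
           Ps i v = cg_scalar (of_nat (card (Br i))) * cg_opt g1 \<and>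
           Ps (i + 1) v = cg_scalar (of_nat (card (Br (i + 1)))) * cg_opt g2)"
    using conjunct2[OF conjunct2[OF wqh[unfolded WQH_def]]] .
  moreover have "v \<in> Br 0" using a(1) blk_0[OF m1] by simp
  ultimately show ?thesis using a(2-4) by blast
qed

lemma case_b:
  fixes g1 g2 :: "'g option"
  assumes "v < c0" "odd i" "i < 2 * length ms" "Ps i v \<noteq> Ps (i + 1) v"
    and "case_b_pair c0 ms gg i v = (g1, g2)"
  shows "\<forall>u \<in> Br i. gg v u = g1" "\<forall>u \<in> Br (i+1). gg v u = g2"
proof -
  let ?P = "\<lambda>(g1, g2). g1 \<noteq> g2 \<and>
           Ps i v = cg_scalar (of_nat (card (Br i))) * cg_opt g1 \<and>
           Ps (i + 1) v = cg_scalar (of_nat (card (Br (i + 1)))) * cg_opt g2"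
  have ex: "\<exists>p. ?P p" using W4[OF assms(1-4)] by auto
  have "?P (case_b_pair c0 ms gg i v)" unfolding case_b_pair_def by (rule someI_ex[OF ex])
  then have p1: "Ps i v = cg_scalar (of_nat (card (Br i))) * cg_opt g1"
    and p2: "Ps (i + 1) v = cg_scalar (of_nat (card (Br (i + 1)))) * cg_opt g2"
    using assms(5) by auto
  show "\<forall>u \<in> Br i. gg v u = g1"
    using case_b_all[where f="gg v" and g=g1, OF finite_blk[OF m1]] p1 unfolding Psi_def by blast
  show "\<forall>u \<in> Br (i+1). gg v u = g2"
    using case_b_all[where f="gg v" and g=g2, OF finite_blk[OF m1]] p2 unfolding Psi_def by blast
qed

lemma pa_same: "(v < c0 \<longleftrightarrow> w < c0) \<Longrightarrow> pa v w = gg v w"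
  by (simp add: psi_alpha_def blk_0[OF m1])

lemma pf:
  assumes "c0 \<le> w" "w < nr"
  shows "psi_from_C0 c0 ms gg v w = (if Ps (lon (bir w)) v = Ps (lon (bir w) + 1) v then gg v w
     else (if w \<in> Br (lon (bir w)) then snd (case_b_pair c0 ms gg (lon (bir w)) v)
           else fst (case_b_pair c0 ms gg (lon (bir w)) v)))"
  unfolding psi_from_C0_def lon_def Let_def by (simp add: split_beta)

lemma pa_C0R: "v < c0 \<Longrightarrow> c0 \<le> w \<Longrightarrow> pa v w = psi_from_C0 c0 ms gg v w"
  by (simp add: psi_alpha_def blk_0[OF m1])

lemma pa_RC0: "c0 \<le> v \<Longrightarrow> w < c0 \<Longrightarrow> pa v w = map_option uminus (psi_from_C0 c0 ms gg w v)"
  by (simp add: psi_alpha_def blk_0[OF m1])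


lemma Q_carrier: "Q_alpha c0 ms \<in> carrier_mat nr nr"
  by (simp add: Q_alpha_def)

lemma adj_carrier: "adj_matrix nr f \<in> carrier_mat nr nr"
  by (simp add: adj_matrix_def)

lemma adj_entry: "u < nr \<Longrightarrow> w < nr \<Longrightarrow> adj_matrix nr f $$ (u, w) = cg_opt (f u w)"
  by (simp add: adj_matrix_def)

lemma QA'_entry:
  assumes "v < nr" "w < nr"
  shows "(Q_alpha c0 ms * adj_matrix nr pa) $$ (v, w) = cg_opt (pa v w) +
    (if c0 \<le> v then cg_scalar (- 1 / of_nat (mbr (bir v))) * (\<Sum>u\<in>Br (bir v). cg_opt (pa u w))
       + cg_scalar (1 / of_nat (mbr (bir v))) * (\<Sum>u\<in>Br (ptn (bir v)). cg_opt (pa u w)) else 0)"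
proof -
  have "(Q_alpha c0 ms * adj_matrix nr pa) $$ (v, w) = (\<Sum>u\<in>{0..<nr}. Q_alpha c0 ms $$ (v, u) * adj_matrix nr pa $$ (u, w))"
    by (rule mult_entry[OF Q_carrier adj_carrier assms])
  also have "\<dots> = adj_matrix nr pa $$ (v, w) +
    (if c0 \<le> v then cg_scalar (- 1 / of_nat (mbr (bir v))) * (\<Sum>u\<in>Br (bir v). adj_matrix nr pa $$ (u, w))
       + cg_scalar (1 / of_nat (mbr (bir v))) * (\<Sum>u\<in>Br (ptn (bir v)). adj_matrix nr pa $$ (u, w)) else 0)"
    by (rule sumL[OF m1 assms(1)])
  also have "\<dots> = cg_opt (pa v w) +
    (if c0 \<le> v then cg_scalar (- 1 / of_nat (mbr (bir v))) * (\<Sum>u\<in>Br (bir v). cg_opt (pa u w))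
       + cg_scalar (1 / of_nat (mbr (bir v))) * (\<Sum>u\<in>Br (ptn (bir v)). cg_opt (pa u w)) else 0)"
    using assms blk_lt[OF m1] by (simp add: adj_entry)
  finally show ?thesis .
qed

lemma AQ_entry:
  assumes "v < nr" "w < nr"
  shows "(adj_matrix nr gg * Q_alpha c0 ms) $$ (v, w) = cg_opt (gg v w) +
    (if c0 \<le> w then Ps (bir w) v * cg_scalar (- 1 / of_nat (mbr (bir w)))
       + Ps (ptn (bir w)) v * cg_scalar (1 / of_nat (mbr (bir w))) else 0)"
proof -
  have "(adj_matrix nr gg * Q_alpha c0 ms) $$ (v, w) = (\<Sum>u\<in>{0..<nr}. adj_matrix nr gg $$ (v, u) * Q_alpha c0 ms $$ (u, w))"
    by (rule mult_entry[OF adj_carrier Q_carrier assms])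
  also have "\<dots> = adj_matrix nr gg $$ (v, w) +
    (if c0 \<le> w then (\<Sum>u\<in>Br (bir w). adj_matrix nr gg $$ (v, u)) * cg_scalar (- 1 / of_nat (mbr (bir w)))
       + (\<Sum>u\<in>Br (ptn (bir w)). adj_matrix nr gg $$ (v, u)) * cg_scalar (1 / of_nat (mbr (bir w))) else 0)"
    by (rule sumR[OF m1 assms(2)])
  also have "\<dots> = cg_opt (gg v w) +
    (if c0 \<le> w then Ps (bir w) v * cg_scalar (- 1 / of_nat (mbr (bir w)))
       + Ps (ptn (bir w)) v * cg_scalar (1 / of_nat (mbr (bir w))) else 0)"
    using assms blk_lt[OF m1] by (simp add: adj_entry Psi_def)
  finally show ?thesis .
qed


lemma Ps_const: "\<forall>u\<in>Br i. gg v u = g \<Longrightarrow> Ps i v = of_nat (card (Br i)) * cg_opt g"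
proof -
  assume h: "\<forall>u\<in>Br i. gg v u = g"
  have "Ps i v = (\<Sum>u\<in>Br i. cg_opt g)" unfolding Psi_def by (rule sum.cong) (use h in auto)
  then show ?thesis by (simp only: sum_constant)
qed

lemma case2:
  assumes v: "v < c0" and w: "c0 \<le> w" "w < nr"
  shows "cg_opt (pa v w) = cg_opt (gg v w) + Ps (bir w) v * cg_scalar (- 1 / of_nat (mbr (bir w)))
       + Ps (ptn (bir w)) v * cg_scalar (1 / of_nat (mbr (bir w)))"
proof -
  define j where "j = bir w"
  have bw: "j \<noteq> 0" "j \<le> 2 * length ms" "w \<in> Br j" using bi_R[OF m1 w] unfolding j_def by auto
  note pj = pt_props[OF m1 bw(1,2)]
  define i where "i = lon j"
  define m where "m = mbr j"
  have m0: "m \<noteq> 0" using mb_pos[OF m1 bw(1,2)] unfolding m_def by simp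
  have ji: "(j = i \<and> ptn j = i + 1) \<or> (j = i + 1 \<and> ptn j = i)" using pj(11) unfolding i_def .
  have cardi: "card (Br i) = m" "card (Br (i+1)) = m"
    using ji card_blk[OF m1 bw(1,2)] card_blk[OF m1 pj(1,2)] pj(5) unfolding m_def by auto
  have pav: "pa v w = psi_from_C0 c0 ms gg v w" using pa_C0R v w by simp
  show ?thesis
  proof (cases "Ps i v = Ps (i + 1) v")
    case True
    then have "pa v w = gg v w" using pav pf[OF w, of v] unfolding j_def i_def by simp
    moreover have "Ps (ptn j) v = Ps j v" using ji True by auto
    ultimately show ?thesis unfolding j_def[symmetric]
      by (simp only: add.assoc alg0 add_0_right)
  next
    case False
    obtain g1 g2 where cb: "case_b_pair c0 ms gg i v = (g1, g2)" by (cases "case_b_pair c0 ms gg i v")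
    have oi: "odd i" "i < 2 * length ms" using pj(7,8) unfolding i_def by auto
    note cbr = case_b[OF v oi False cb]
    have P1: "Ps i v = of_nat m * cg_opt g1" using Ps_const[OF cbr(1)] cardi by simp
    have P2: "Ps (i+1) v = of_nat m * cg_opt g2" using Ps_const[OF cbr(2)] cardi by simp
    have pav2: "pa v w = (if w \<in> Br i then g2 else g1)"
      using pav pf[OF w, of v] False cb unfolding j_def[symmetric] i_def[symmetric] by simp
    from ji show ?thesis
    proof
      assume a: "j = i \<and> ptn j = i + 1"
      then have g: "gg v w = g1" "pa v w = g2" using cbr(1) bw(3) pav2 by auto
      have e: "Ps j v = Ps i v" "Ps (ptn j) v = Ps (i+1) v" using a by auto
      show ?thesis unfolding j_def[symmetric] m_def[symmetric] e P1 P2 g by (rule alg1[OF m0])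
    next
      assume a: "j = i + 1 \<and> ptn j = i"
      have "w \<notin> Br i"
      proof
        assume "w \<in> Br i"
        then have "j = i" using blk_inj[OF m1 bw(3)] by blast
        then show False using a by simp
      qed
      then have g: "gg v w = g2" "pa v w = g1" using a cbr(2) bw(3) pav2 by auto
      have e: "Ps j v = Ps (i+1) v" "Ps (ptn j) v = Ps i v" using a by auto
      show ?thesis unfolding j_def[symmetric] m_def[symmetric] e P1 P2 g by (rule alg1[OF m0])
    qed
  qed
qed


lemma sum_const_on: "\<forall>u\<in>S. f u = c \<Longrightarrow> (\<Sum>u\<in>S. cg_opt (f u)) = of_nat (card S) * (cg_opt c :: 'g cg)"
proof -
  assume h: "\<forall>u\<in>S. f u = c"
  have "(\<Sum>u\<in>S. cg_opt (f u)) = (\<Sum>u\<in>S. (cg_opt c :: 'g cg))" by (rule sum.cong) (use h in auto)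
  then show ?thesis by (simp only: sum_constant)
qed

lemma case3:
  assumes v: "c0 \<le> v" "v < nr" and w: "w < c0"
  shows "cg_opt (pa v w) + (cg_scalar (- 1 / of_nat (mbr (bir v))) * (\<Sum>u\<in>Br (bir v). cg_opt (pa u w))
       + cg_scalar (1 / of_nat (mbr (bir v))) * (\<Sum>u\<in>Br (ptn (bir v)). cg_opt (pa u w)))
       = cg_opt (gg v w)"
proof -
  define j where "j = bir v"
  have bv: "j \<noteq> 0" "j \<le> 2 * length ms" "v \<in> Br j" using bi_R[OF m1 v] unfolding j_def by auto
  note pj = pt_props[OF m1 bv(1,2)]
  define i where "i = lon j"
  define m where "m = mbr j"
  have m0: "m \<noteq> 0" using mb_pos[OF m1 bv(1,2)] unfolding m_def by simp
  have ji: "(j = i \<and> ptn j = i + 1) \<or> (j = i + 1 \<and> ptn j = i)" using pj(11) unfolding i_def .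
  have cardi: "card (Br i) = m" "card (Br (i+1)) = m"
    using ji card_blk[OF m1 bv(1,2)] card_blk[OF m1 pj(1,2)] pj(5) unfolding m_def by auto
  have wn: "w < nr" using w v by simp
  have uR: "c0 \<le> u \<and> u < nr" if "u \<in> Br i \<union> Br (i+1)" for u
    using that ji blk_R[OF m1 bv(1)] blk_R[OF m1 pj(1)] by auto
  have ubi: "lon (bir u) = i" if "u \<in> Br i \<union> Br (i+1)" for u
  proof -
    have "u \<in> Br j \<or> u \<in> Br (ptn j)" using that ji by auto
    then show ?thesis
    proof
      assume "u \<in> Br j" then have "bir u = j" by (rule bi_eq[OF m1 bv(1)])
      then show ?thesis unfolding i_def by simp
    next
      assume "u \<in> Br (ptn j)" then have "bir u = ptn j" by (rule bi_eq[OF m1 pj(1)])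
      then show ?thesis unfolding i_def using pj(6) by simp
    qed
  qed
  have pau: "pa u w = map_option uminus (if Ps i w = Ps (i + 1) w then gg w u
     else (if u \<in> Br i then snd (case_b_pair c0 ms gg i w) else fst (case_b_pair c0 ms gg i w)))"
    if "u \<in> Br i \<union> Br (i+1)" for u
    using pa_RC0[of u w] pf[of u w] uR[OF that] ubi[OF that] w by simp
  have vI: "v \<in> Br i \<union> Br (i+1)" using bv(3) ji by auto
  have sj: "(\<Sum>u\<in>Br j. cg_opt (pa u w)) = (\<Sum>u\<in>Br i. cg_opt (pa u w)) \<and>
            (\<Sum>u\<in>Br (ptn j). cg_opt (pa u w)) = (\<Sum>u\<in>Br (i+1). cg_opt (pa u w)) \<or>
            (\<Sum>u\<in>Br j. cg_opt (pa u w)) = (\<Sum>u\<in>Br (i+1). cg_opt (pa u w)) \<and>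
            (\<Sum>u\<in>Br (ptn j). cg_opt (pa u w)) = (\<Sum>u\<in>Br i. cg_opt (pa u w))" using ji by auto
  show ?thesis
  proof (cases "Ps i w = Ps (i + 1) w")
    case True
    have pu: "pa u w = map_option uminus (gg w u)" if "u \<in> Br i \<union> Br (i+1)" for u
      using pau[OF that] True by simp
    have s1: "(\<Sum>u\<in>Br i. cg_opt (map_option uminus (gg w u))) = (\<Sum>u\<in>Br (i+1). cg_opt (map_option uminus (gg w u)))"
      by (rule sum_opt_inv[OF finite_blk[OF m1] finite_blk[OF m1]]) (use True in \<open>simp add: Psi_def\<close>)
    have s2: "(\<Sum>u\<in>Br i. cg_opt (pa u w)) = (\<Sum>u\<in>Br (i+1). cg_opt (pa u w))"
      using s1 pu by (simp cong: sum.cong)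
    have "(\<Sum>u\<in>Br (ptn j). cg_opt (pa u w)) = (\<Sum>u\<in>Br j. cg_opt (pa u w))" using sj s2 by auto
    moreover have "pa v w = gg v w" using pu[OF vI] gsym[of w v] wn v by simp
    ultimately show ?thesis unfolding j_def[symmetric] m_def[symmetric]
      by (simp only: alg0' add_0_right)
  next
    case False
    obtain g1 g2 where cb: "case_b_pair c0 ms gg i w = (g1, g2)" by (cases "case_b_pair c0 ms gg i w")
    have oi: "odd i" "i < 2 * length ms" using pj(7,8) unfolding i_def by auto
    note cbr = case_b[OF w oi False cb]
    have di: "u \<notin> Br i" if "u \<in> Br (i+1)" for u using blk_inj[OF m1 that, of i] by auto
    have S1: "(\<Sum>u\<in>Br i. cg_opt (pa u w)) = of_nat m * cg_opt (map_option uminus g2)"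
      using sum_const_on[of "Br i" "\<lambda>u. pa u w" "map_option uminus g2"] pau False cb cardi by simp
    have S2: "(\<Sum>u\<in>Br (i+1). cg_opt (pa u w)) = of_nat m * cg_opt (map_option uminus g1)"
      using sum_const_on[of "Br (i+1)" "\<lambda>u. pa u w" "map_option uminus g1"] pau False cb cardi di by simp
    from ji show ?thesis
    proof
      assume a: "j = i \<and> ptn j = i + 1"
      have g: "gg v w = map_option uminus g1" "pa v w = map_option uminus g2"
        using gsym[of w v] wn v cbr(1) pau[OF vI] False cb a bv(3) by auto
      have e: "(\<Sum>u\<in>Br j. cg_opt (pa u w)) = of_nat m * cg_opt (map_option uminus g2)"
        "(\<Sum>u\<in>Br (ptn j). cg_opt (pa u w)) = of_nat m * cg_opt (map_option uminus g1)"
        using a S1 S2 by auto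
      show ?thesis unfolding j_def[symmetric] m_def[symmetric] e g add.assoc[symmetric]
        by (rule alg1'[OF m0, symmetric])
    next
      assume a: "j = i + 1 \<and> ptn j = i"
      have g: "gg v w = map_option uminus g2" "pa v w = map_option uminus g1"
        using gsym[of w v] wn v cbr(2) pau[OF vI] False cb a bv(3) di[of v] by auto
      have e: "(\<Sum>u\<in>Br j. cg_opt (pa u w)) = of_nat m * cg_opt (map_option uminus g1)"
        "(\<Sum>u\<in>Br (ptn j). cg_opt (pa u w)) = of_nat m * cg_opt (map_option uminus g2)"
        using a S1 S2 by auto
      show ?thesis unfolding j_def[symmetric] m_def[symmetric] e g add.assoc[symmetric]
        by (rule alg1'[OF m0, symmetric])
    qed
  qed
qed


lemma colsum:
  assumes i: "i \<noteq> 0" "i \<le> 2 * length ms" and j: "j \<noteq> 0" "j \<le> 2 * length ms"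
    and w: "w \<in> Br j" and v0: "v0 \<in> Br i"
  shows "of_nat (mbr j) * (\<Sum>u\<in>Br i. cg_opt (gg u w)) = of_nat (mbr i) * Ps j v0"
proof -
  have lt: "x < nr" if "x \<in> Br k" for x k using blk_lt[OF m1 that] .
  have colc: "(\<Sum>u\<in>Br i. cg_opt (gg u w')) = (\<Sum>u\<in>Br i. cg_opt (gg u w))" if w': "w' \<in> Br j" for w'
  proof -
    have "Ps i w' = Ps i w" using W2[OF j i w' w] .
    then have "(\<Sum>u\<in>Br i. cg_opt (map_option uminus (gg w' u))) = (\<Sum>u\<in>Br i. cg_opt (map_option uminus (gg w u)))"
      by (intro sum_opt_inv[OF finite_blk[OF m1] finite_blk[OF m1]]) (simp add: Psi_def)
    moreover have "\<And>u. u \<in> Br i \<Longrightarrow> gg u w' = map_option uminus (gg w' u)"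
      using gsym lt w' by blast
    moreover have "\<And>u. u \<in> Br i \<Longrightarrow> gg u w = map_option uminus (gg w u)"
      using gsym lt w by blast
    ultimately show ?thesis by (simp cong: sum.cong)
  qed
  have "(\<Sum>w'\<in>Br j. \<Sum>u\<in>Br i. cg_opt (gg u w')) = (\<Sum>w'\<in>Br j. \<Sum>u\<in>Br i. (cg_opt (gg u w) :: 'g cg))"
    by (rule sum.cong) (use colc in auto)
  also have "\<dots> = of_nat (mbr j) * (\<Sum>u\<in>Br i. cg_opt (gg u w))"
    by (simp only: sum_constant card_blk[OF m1 j])
  finally have L: "(\<Sum>w'\<in>Br j. \<Sum>u\<in>Br i. cg_opt (gg u w')) = of_nat (mbr j) * (\<Sum>u\<in>Br i. cg_opt (gg u w))" .
  have "(\<Sum>w'\<in>Br j. \<Sum>u\<in>Br i. cg_opt (gg u w')) = (\<Sum>u\<in>Br i. \<Sum>w'\<in>Br j. (cg_opt (gg u w') :: 'g cg))"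
    by (rule sum.swap)
  also have "\<dots> = (\<Sum>u\<in>Br i. Ps j u)" by (simp add: Psi_def)
  also have "\<dots> = (\<Sum>u\<in>Br i. Ps j v0)" by (rule sum.cong) (use W2[OF i j _ v0] in auto)
  also have "\<dots> = of_nat (mbr i) * Ps j v0" by (simp only: sum_constant card_blk[OF m1 i])
  finally show ?thesis using L by simp
qed

lemma cross:
  assumes jv: "jv \<noteq> 0" "jv \<le> 2 * length ms" and jw: "jw \<noteq> 0" "jw \<le> 2 * length ms"
    and v: "v \<in> Br jv" and v2: "v2 \<in> Br (ptn jv)"
  shows "Ps jw v2 = Ps (ptn jw) v"
proof -
  note pv = pt_props[OF m1 jv]
  note pw = pt_props[OF m1 jw]
  define i where "i = lon jv"
  define l where "l = lon jw"
  have oi: "odd i" "i < 2 * length ms" "odd l" "l < 2 * length ms"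
    using pv(7,8) pw(7,8) unfolding i_def l_def by auto
  from pv(11) show ?thesis
  proof
    assume a: "jv = lon jv \<and> ptn jv = lon jv + 1"
    then have "v \<in> Br i" "v2 \<in> Br (i+1)" using v v2 unfolding i_def by auto
    note W = W3[OF oi this]
    from pw(11) show ?thesis
    proof
      assume "jw = lon jw \<and> ptn jw = lon jw + 1"
      then show ?thesis using W unfolding l_def by auto
    next
      assume "jw = lon jw + 1 \<and> ptn jw = lon jw"
      then show ?thesis using W unfolding l_def by auto
    qed
  next
    assume a: "jv = lon jv + 1 \<and> ptn jv = lon jv"
    then have "v2 \<in> Br i" "v \<in> Br (i+1)" using v v2 unfolding i_def by auto
    note W = W3[OF oi this]
    from pw(11) show ?thesis
    proof
      assume "jw = lon jw \<and> ptn jw = lon jw + 1"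
      then show ?thesis using W unfolding l_def by auto
    next
      assume "jw = lon jw + 1 \<and> ptn jw = lon jw"
      then show ?thesis using W unfolding l_def by auto
    qed
  qed
qed

lemma case4:
  assumes v: "c0 \<le> v" "v < nr" and w: "c0 \<le> w" "w < nr"
  shows "cg_opt (pa v w) + (cg_scalar (- 1 / of_nat (mbr (bir v))) * (\<Sum>u\<in>Br (bir v). cg_opt (pa u w))
       + cg_scalar (1 / of_nat (mbr (bir v))) * (\<Sum>u\<in>Br (ptn (bir v)). cg_opt (pa u w)))
       = cg_opt (gg v w) + (Ps (bir w) v * cg_scalar (- 1 / of_nat (mbr (bir w)))
       + Ps (ptn (bir w)) v * cg_scalar (1 / of_nat (mbr (bir w))))"
proof -
  define jv where "jv = bir v"
  define jw where "jw = bir w"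
  have bv: "jv \<noteq> 0" "jv \<le> 2 * length ms" "v \<in> Br jv" using bi_R[OF m1 v] unfolding jv_def by auto
  have bw: "jw \<noteq> 0" "jw \<le> 2 * length ms" "w \<in> Br jw" using bi_R[OF m1 w] unfolding jw_def by auto
  note pv = pt_props[OF m1 bv(1,2)]
  have mv0: "mbr jv \<noteq> 0" using mb_pos[OF m1 bv(1,2)] by simp
  have mw0: "mbr jw \<noteq> 0" using mb_pos[OF m1 bw(1,2)] by simp
  have paR: "pa u w = gg u w" if "u \<in> Br k" "k \<noteq> 0" for u k
    using pa_same[of u w] blk_R[OF m1 that(2,1)] w by simp
  have s1: "(\<Sum>u\<in>Br jv. cg_opt (pa u w)) = (\<Sum>u\<in>Br jv. cg_opt (gg u w))"
    by (rule sum.cong) (use paR bv(1) in auto)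
  have s2: "(\<Sum>u\<in>Br (ptn jv). cg_opt (pa u w)) = (\<Sum>u\<in>Br (ptn jv). cg_opt (gg u w))"
    by (rule sum.cong) (use paR pv(1) in auto)
  have pvw: "pa v w = gg v w" using paR[OF bv(3,1)] .
  obtain v2 where v2: "v2 \<in> Br (ptn jv)" using blk_ne[OF m1 pv(1,2)] by blast
  have C1: "of_nat (mbr jw) * (\<Sum>u\<in>Br jv. cg_opt (gg u w)) = of_nat (mbr jv) * Ps jw v"
    by (rule colsum[OF bv(1,2) bw(1,2) bw(3) bv(3)])
  have C2: "of_nat (mbr jw) * (\<Sum>u\<in>Br (ptn jv). cg_opt (gg u w)) = of_nat (mbr jv) * Ps (ptn jw) v"
    using colsum[OF pv(1,2) bw(1,2) bw(3) v2] cross[OF bv(1,2) bw(1,2) bv(3) v2] pv(5) by simp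
  show ?thesis unfolding jv_def[symmetric] jw_def[symmetric] s1 s2 pvw
    using alg4[OF mv0 mw0 C1 C2] by simp
qed

lemma QA_AQ: "Q_alpha c0 ms * adj_matrix nr pa = adj_matrix nr gg * Q_alpha c0 ms"
proof (rule eq_matI)
  show "dim_row (Q_alpha c0 ms * adj_matrix nr pa) = dim_row (adj_matrix nr gg * Q_alpha c0 ms)"
    by (simp add: Q_alpha_def adj_matrix_def)
  show "dim_col (Q_alpha c0 ms * adj_matrix nr pa) = dim_col (adj_matrix nr gg * Q_alpha c0 ms)"
    by (simp add: Q_alpha_def adj_matrix_def)
  fix v w assume "v < dim_row (adj_matrix nr gg * Q_alpha c0 ms)" "w < dim_col (adj_matrix nr gg * Q_alpha c0 ms)"
  then have vw: "v < nr" "w < nr" by (simp_all add: Q_alpha_def adj_matrix_def)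
  show "(Q_alpha c0 ms * adj_matrix nr pa) $$ (v, w) = (adj_matrix nr gg * Q_alpha c0 ms) $$ (v, w)"
  proof (cases "c0 \<le> v"; cases "c0 \<le> w")
    assume "c0 \<le> v" "c0 \<le> w" then show ?thesis unfolding QA'_entry[OF vw] AQ_entry[OF vw] using case4[of v w] vw by simp
  next
    assume a: "c0 \<le> v" "\<not> c0 \<le> w" then show ?thesis unfolding QA'_entry[OF vw] AQ_entry[OF vw] using case3[of v w] vw by simp
  next
    assume a: "\<not> c0 \<le> v" "c0 \<le> w" then show ?thesis unfolding QA'_entry[OF vw] AQ_entry[OF vw] using case2[of v w] vw by (simp add: add.assoc)
  next
    assume a: "\<not> c0 \<le> v" "\<not> c0 \<le> w" then show ?thesis unfolding QA'_entry[OF vw] AQ_entry[OF vw] using pa_same[of v w] by simp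
  qed
qed


lemma scal_add_neg: "cg_scalar (- 1 / a) + cg_scalar (1 / a) = (0 :: 'g cg)"
  by (rule poly_mapping_eqI) (simp add: lookup_add lookup_scal)

lemma scal_add_neg2: "cg_scalar (- (1 / a)) + cg_scalar (1 / a) = (0 :: 'g cg)"
  by (rule poly_mapping_eqI) (simp add: lookup_add lookup_scal)

lemma colQ:
  assumes j: "j \<noteq> 0" "j \<le> 2 * length ms" and w: "w < nr"
  shows "(\<Sum>u\<in>Br j. Q_alpha c0 ms $$ (u, w)) = (if c0 \<le> w \<and> bir w = j then 0
     else if c0 \<le> w \<and> ptn (bir w) = j then (1 :: 'g cg) else 0)"
proof -
  have uR: "c0 \<le> u \<and> u < nr" if "u \<in> Br j" for u using blk_R[OF m1 j(1) that] .
  have "(\<Sum>u\<in>Br j. Q_alpha c0 ms $$ (u, w)) = (\<Sum>u\<in>Br j. (if u = w then 1 else 0) + (Dm c0 ms u w :: 'g cg))"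
  proof (rule sum.cong)
    fix u assume "u \<in> Br j"
    then have "u < nr" using uR by blast
    then show "Q_alpha c0 ms $$ (u, w) = (if u = w then 1 else 0) + (Dm c0 ms u w :: 'g cg)"
      using Q_entry[OF m1 _ w] by blast
  qed simp
  also have "\<dots> = (if w \<in> Br j then 1 else 0) + (\<Sum>u\<in>Br j. Dm c0 ms u w)"
    by (simp add: sum.distrib finite_blk[OF m1] sum.delta' eq_commute)
  finally have S: "(\<Sum>u\<in>Br j. Q_alpha c0 ms $$ (u, w)) = (if w \<in> Br j then 1 else 0) + (\<Sum>u\<in>Br j. (Dm c0 ms u w :: 'g cg))" .
  show ?thesis
  proof (cases "c0 \<le> w")
    case False
    have "w \<notin> Br j" using uR False by auto
    moreover have "(\<Sum>u\<in>Br j. (Dm c0 ms u w :: 'g cg)) = 0"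
      by (rule sum.neutral) (use Dm_col[OF m1 _ w] uR False in auto)
    ultimately show ?thesis using S False by simp
  next
    case True
    define jw where "jw = bir w"
    have bw: "jw \<noteq> 0" "jw \<le> 2 * length ms" "w \<in> Br jw" using bi_R[OF m1 True w] unfolding jw_def by auto
    note pw = pt_props[OF m1 bw(1,2)]
    have D: "Dm c0 ms u w = (if u \<in> Br jw then cg_scalar (- 1 / of_nat (mbr jw))
       else if u \<in> Br (ptn jw) then cg_scalar (1 / of_nat (mbr jw)) else (0 :: 'g cg))" if "u \<in> Br j" for u
      using Dm_col[OF m1 _ w, of u] uR[OF that] True unfolding jw_def by simp
    have m0: "mbr jw \<noteq> 0" using mb_pos[OF m1 bw(1,2)] by simp
    consider "jw = j" | "ptn jw = j" | "jw \<noteq> j" "ptn jw \<noteq> j" by blast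
    then show ?thesis
    proof cases
      case 1
      have "(\<Sum>u\<in>Br j. (Dm c0 ms u w :: 'g cg)) = (\<Sum>u\<in>Br j. cg_scalar (- 1 / of_nat (mbr jw)))"
        by (rule sum.cong) (use D 1 in auto)
      also have "\<dots> = of_nat (mbr jw) * cg_scalar (- 1 / of_nat (mbr jw))"
        using card_blk[OF m1 j] 1 by (simp only: sum_constant)
      also have "\<dots> = -1"
        by (rule poly_mapping_eqI) (use m0 in \<open>simp add: ofnat_cg lookup_scal_l lookup_scal lookup_one when_def\<close>)
      finally show ?thesis using S 1 bw(3) unfolding jw_def by simp
    next
      case 2
      have ne: "jw \<noteq> j" using 2 pw(4) by auto
      have nb: "u \<notin> Br jw" if "u \<in> Br j" for u using blk_inj[OF m1 that, of jw] ne by auto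
      have "(\<Sum>u\<in>Br j. (Dm c0 ms u w :: 'g cg)) = (\<Sum>u\<in>Br j. cg_scalar (1 / of_nat (mbr jw)))"
        by (rule sum.cong) (use D 2 nb in auto)
      also have "\<dots> = of_nat (mbr jw) * cg_scalar (1 / of_nat (mbr jw))"
        using card_blk[OF m1 j] 2 pw(5) by (simp only: sum_constant)
      also have "\<dots> = 1"
        by (rule poly_mapping_eqI) (use m0 in \<open>simp add: ofnat_cg lookup_scal_l lookup_scal lookup_one when_def\<close>)
      moreover have "w \<notin> Br j" using nb[of w] bw(3) by blast
      ultimately show ?thesis using S 2 ne True unfolding jw_def by simp
    next
      case 3
      have nb: "u \<notin> Br jw" "u \<notin> Br (ptn jw)" if "u \<in> Br j" for u
        using blk_inj[OF m1 that, of jw] blk_inj[OF m1 that, of "ptn jw"] 3 by auto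
      have "(\<Sum>u\<in>Br j. (Dm c0 ms u w :: 'g cg)) = 0"
        by (rule sum.neutral) (use D nb in auto)
      then show ?thesis using S 3 nb(1)[of w] bw(3) True unfolding jw_def by auto
    qed
  qed
qed

lemma QQ: "Q_alpha c0 ms * Q_alpha c0 ms = (1\<^sub>m nr :: 'g cg mat)"
proof (rule eq_matI)
  show "dim_row (Q_alpha c0 ms * Q_alpha c0 ms) = dim_row (1\<^sub>m nr :: 'g cg mat)" by (simp add: Q_alpha_def)
  show "dim_col (Q_alpha c0 ms * Q_alpha c0 ms) = dim_col (1\<^sub>m nr :: 'g cg mat)" by (simp add: Q_alpha_def)
  fix v w assume "v < dim_row (1\<^sub>m nr :: 'g cg mat)" "w < dim_col (1\<^sub>m nr :: 'g cg mat)"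
  then have vw: "v < nr" "w < nr" by auto
  have E: "(Q_alpha c0 ms * Q_alpha c0 ms) $$ (v, w) = Q_alpha c0 ms $$ (v, w) +
    (if c0 \<le> v then cg_scalar (- 1 / of_nat (mbr (bir v))) * (\<Sum>u\<in>Br (bir v). Q_alpha c0 ms $$ (u, w))
       + cg_scalar (1 / of_nat (mbr (bir v))) * (\<Sum>u\<in>Br (ptn (bir v)). Q_alpha c0 ms $$ (u, w)) else (0::'g cg))"
    unfolding mult_entry[OF Q_carrier Q_carrier vw] by (rule sumL[OF m1 vw(1)])
  have Qvw: "Q_alpha c0 ms $$ (v, w) = (if v = w then 1 else 0) + (Dm c0 ms v w :: 'g cg)"
    by (rule Q_entry[OF m1 vw])
  show "(Q_alpha c0 ms * Q_alpha c0 ms) $$ (v, w) = (1\<^sub>m nr :: 'g cg mat) $$ (v, w)"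
  proof (cases "c0 \<le> v")
    case False
    then show ?thesis using E Qvw vw by (simp add: Dm_def[OF m1])
  next
    case cv: True
    define j where "j = bir v"
    have bv: "j \<noteq> 0" "j \<le> 2 * length ms" "v \<in> Br j" using bi_R[OF m1 cv vw(1)] unfolding j_def by auto
    note pv = pt_props[OF m1 bv(1,2)]
    define m where "m = mbr j"
    note c1 = colQ[OF bv(1,2) vw(2)]
    note c2 = colQ[OF pv(1,2) vw(2)]
    have E2: "(Q_alpha c0 ms * Q_alpha c0 ms) $$ (v, w) = (if v = w then 1 else 0) + (Dm c0 ms v w :: 'g cg) +
       (cg_scalar (- 1 / of_nat m) * (\<Sum>u\<in>Br j. Q_alpha c0 ms $$ (u, w))
       + cg_scalar (1 / of_nat m) * (\<Sum>u\<in>Br (ptn j). Q_alpha c0 ms $$ (u, w)))"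
      unfolding mult_entry[OF Q_carrier Q_carrier vw] sumL[OF m1 vw(1)] Qvw j_def m_def
      by (simp only: cv if_True)
    have Dv: "Dm c0 ms v w = (if w \<in> Br j then cg_scalar (- 1 / of_nat m)
       else if w \<in> Br (ptn j) then cg_scalar (1 / of_nat m) else (0 :: 'g cg))"
      using cv vw unfolding Dm_def[OF m1] j_def m_def by simp
    show ?thesis
    proof (cases "c0 \<le> w")
      case False
      have "w \<notin> Br j" "w \<notin> Br (ptn j)" using blk_R[OF m1 bv(1)] blk_R[OF m1 pv(1)] False by auto
      moreover have "v \<noteq> w" using cv False by auto
      ultimately show ?thesis using E2 Dv c1 c2 False vw by simp
    next
      case cw: True
      define jw where "jw = bir w"
      have bw: "jw \<noteq> 0" "jw \<le> 2 * length ms" "w \<in> Br jw" using bi_R[OF m1 cw vw(2)] unfolding jw_def by auto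
      note pw = pt_props[OF m1 bw(1,2)]
      consider "jw = j" | "jw = ptn j" | "jw \<noteq> j" "jw \<noteq> ptn j" by blast
      then show ?thesis
      proof cases
        case 1
        have "(Q_alpha c0 ms * Q_alpha c0 ms) $$ (v, w) = (if v = w then 1 else 0) +
            (cg_scalar (- 1 / of_nat m) + cg_scalar (1 / of_nat m) :: 'g cg)"
          using E2 Dv c1 c2 1 bw(3) pv(4) cw unfolding jw_def by (simp add: add.assoc)
        then show ?thesis using vw by (simp only: scal_add_neg add_0_right) simp
      next
        case 2
        have wj: "w \<notin> Br j" using blk_inj[OF m1 bw(3), of j] 2 pv(4) by auto
        have "v \<noteq> w" using wj bv(3) by auto
        moreover have "(Q_alpha c0 ms * Q_alpha c0 ms) $$ (v, w) =
            (cg_scalar (1 / of_nat m) + cg_scalar (- 1 / of_nat m) :: 'g cg)"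
          using E2 Dv c1 c2 2 bw(3) pv(3,4) cw wj \<open>v \<noteq> w\<close> unfolding jw_def by simp
        ultimately show ?thesis using vw scal_add_neg2[of "of_nat m"] by (simp add: add.commute)
      next
        case 3
        have wj: "w \<notin> Br j" "w \<notin> Br (ptn j)"
          using blk_inj[OF m1 bw(3), of j] blk_inj[OF m1 bw(3), of "ptn j"] 3 by auto
        have "v \<noteq> w" using wj bv(3) by auto
        have n1: "ptn jw \<noteq> j" using 3 pw(3) by metis
        have n2: "ptn jw \<noteq> ptn j" using 3 pv(3) pw(3) by metis
        show ?thesis using E2 Dv c1 c2 wj \<open>v \<noteq> w\<close> 3 n1 n2 cw vw unfolding jw_def by simp
      qed
    qed
  qed
qed


lemma Qc: "(Q_alpha c0 ms :: 'g cg mat) \<in> carrier_mat nr nr" by (rule Q_carrier)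

lemma Q_central: "k < nr \<Longrightarrow> i < nr \<Longrightarrow> x * Q_alpha c0 ms $$ (k, i) = Q_alpha c0 ms $$ (k, i) * (x :: 'g cg)"
  by (simp add: Q_entry[OF m1] Dm_def[OF m1] scal_central distrib_left distrib_right)

lemma trace_comm:
  assumes M: "M \<in> carrier_mat nr nr"
  shows "mat_trace (M * Q_alpha c0 ms) = mat_trace (Q_alpha c0 ms * (M :: 'g cg mat))"
proof -
  have "mat_trace (M * Q_alpha c0 ms) = (\<Sum>i\<in>{0..<nr}. \<Sum>k\<in>{0..<nr}. M $$ (i, k) * Q_alpha c0 ms $$ (k, i))"
    unfolding mat_trace_def using M by (simp add: lessThan_atLeast0 mult_entry[OF M Qc])
  also have "\<dots> = (\<Sum>i\<in>{0..<nr}. \<Sum>k\<in>{0..<nr}. Q_alpha c0 ms $$ (k, i) * M $$ (i, k))"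
    by (intro sum.cong refl) (simp add: Q_central)
  also have "\<dots> = (\<Sum>k\<in>{0..<nr}. \<Sum>i\<in>{0..<nr}. Q_alpha c0 ms $$ (k, i) * M $$ (i, k))"
    by (rule sum.swap)
  also have "\<dots> = (\<Sum>k\<in>{0..<nr}. (Q_alpha c0 ms * M) $$ (k, k))"
  proof (rule sum.cong[OF refl])
    fix k assume "k \<in> {0..<nr}"
    then show "(\<Sum>i\<in>{0..<nr}. Q_alpha c0 ms $$ (k, i) * M $$ (i, k)) = (Q_alpha c0 ms * M) $$ (k, k)"
      using mult_entry[OF Qc M, of k k] by simp
  qed
  also have "\<dots> = mat_trace (Q_alpha c0 ms * M)"
  proof -
    have "dim_row (Q_alpha c0 ms * M) = nr" using Qc by simp
    then show ?thesis unfolding mat_trace_def by (simp only: lessThan_atLeast0)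
  qed
  finally show ?thesis .
qed

lemma QQX: "X \<in> carrier_mat nr n \<Longrightarrow> Q_alpha c0 ms * (Q_alpha c0 ms * X) = (X :: 'g cg mat)"
proof -
  assume X: "X \<in> carrier_mat nr n"
  have "Q_alpha c0 ms * (Q_alpha c0 ms * X) = (Q_alpha c0 ms * Q_alpha c0 ms) * X"
    by (rule assoc_mult_mat[symmetric, OF Qc Qc X])
  also have "\<dots> = X" using X by (simp add: QQ)
  finally show ?thesis .
qed

lemma trace_conj:
  assumes Bm: "Bm \<in> carrier_mat nr nr"
  shows "mat_trace (Q_alpha c0 ms * Bm * Q_alpha c0 ms) = mat_trace (Bm :: 'g cg mat)"
proof -
  have QB: "Q_alpha c0 ms * Bm \<in> carrier_mat nr nr" using mult_carrier_mat[OF Qc Bm] .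
  have "mat_trace (Q_alpha c0 ms * Bm * Q_alpha c0 ms) = mat_trace (Q_alpha c0 ms * (Q_alpha c0 ms * Bm))"
    by (rule trace_comm[OF QB])
  also have "\<dots> = mat_trace Bm" using QQX[OF Bm] by simp
  finally show ?thesis .
qed

lemma final:
  "adj_matrix nr pa = Q_alpha c0 ms * adj_matrix nr gg * Q_alpha c0 ms
   \<and> G_cospectral (adj_matrix nr gg) (adj_matrix nr pa)"
proof -
  let ?Q = "Q_alpha c0 ms :: 'g cg mat" and ?A = "adj_matrix nr gg" and ?A' = "adj_matrix nr pa"
  have Q: "?Q \<in> carrier_mat nr nr" by (rule Q_carrier)
  have A: "?A \<in> carrier_mat nr nr" by (rule adj_carrier)
  have A': "?A' \<in> carrier_mat nr nr" by (rule adj_carrier)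
  have eq: "?A' = ?Q * ?A * ?Q"
  proof -
    have "?Q * ?A * ?Q = ?Q * (?A * ?Q)" by (rule assoc_mult_mat[OF Q A Q])
    also have "\<dots> = ?Q * (?Q * ?A')" by (simp add: QA_AQ)
    also have "\<dots> = ?A'" by (rule QQX[OF A'])
    finally show ?thesis by simp
  qed
  have pw: "?A' ^\<^sub>m h = ?Q * (?A ^\<^sub>m h) * ?Q" for h
  proof (induction h)
    case 0
    have "?Q * (?A ^\<^sub>m 0) * ?Q = ?Q * ?Q" using Q A by simp
    also have "\<dots> = 1\<^sub>m nr" by (rule QQ)
    finally show ?case using A' by simp
  next
    case (Suc h)
    have P: "?A ^\<^sub>m h \<in> carrier_mat nr nr" using A by simp
    have AQ: "?A * ?Q \<in> carrier_mat nr nr" using mult_carrier_mat[OF A Q] .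
    have QP: "?Q * ?A ^\<^sub>m h \<in> carrier_mat nr nr" using mult_carrier_mat[OF Q P] .
    have X: "?Q * ?A * ?Q \<in> carrier_mat nr nr" using mult_carrier_mat[OF mult_carrier_mat[OF Q A] Q] .
    have QX: "?Q * (?Q * ?A * ?Q) = ?A * ?Q"
      unfolding assoc_mult_mat[OF Q A Q] by (rule QQX[OF AQ])
    have "?A' ^\<^sub>m Suc h = (?Q * (?A ^\<^sub>m h) * ?Q) * (?Q * ?A * ?Q)" using Suc eq by simp
    also have "\<dots> = (?Q * (?A ^\<^sub>m h)) * (?Q * (?Q * ?A * ?Q))" by (rule assoc_mult_mat[OF QP Q X])
    also have "\<dots> = (?Q * (?A ^\<^sub>m h)) * (?A * ?Q)" unfolding QX ..
    also have "\<dots> = ?Q * ((?A ^\<^sub>m h) * (?A * ?Q))" by (rule assoc_mult_mat[OF Q P AQ])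
    also have "\<dots> = ?Q * ((?A ^\<^sub>m h * ?A) * ?Q)" unfolding assoc_mult_mat[OF P A Q] ..
    also have "\<dots> = ?Q * (?A ^\<^sub>m h * ?A) * ?Q"
      by (rule assoc_mult_mat[OF Q mult_carrier_mat[OF P A] Q, symmetric])
    also have "\<dots> = ?Q * (?A ^\<^sub>m Suc h) * ?Q" by simp
    finally show ?case .
  qed
  have "mat_trace (?A ^\<^sub>m h) = mat_trace (?A' ^\<^sub>m h)" for h
    using pw[of h] trace_conj[of "?A ^\<^sub>m h"] A by simp
  then have "G_cospectral ?A ?A'" unfolding G_cospectral_def by simp
  then show ?thesis using eq by simp
qed

end

theorem mainTheorem2:
  fixes gg :: "nat \<Rightarrow> nat \<Rightarrow> 'g::group_add option"
    and c0 :: nat and ms :: "nat list"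
  assumes "gain_graph (nverts c0 ms) gg"
    and "\<forall>m \<in> set ms. m \<ge> 1"
    and "WQH c0 ms gg"
  shows "adj_matrix (nverts c0 ms) (psi_alpha c0 ms gg)
           = Q_alpha c0 ms * adj_matrix (nverts c0 ms) gg * Q_alpha c0 ms
         \<and> G_cospectral (adj_matrix (nverts c0 ms) gg) (adj_matrix (nverts c0 ms) (psi_alpha c0 ms gg))"
  by (rule final[OF assms(2) assms(1) assms(3)])


end
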